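(* Let $(u,v)$ be a $C^3$ solution of system (W) on an open set $U\subseteq\mathbb{R}^2$. If $u_y\neq0$ on $U$, then $\partial_x\beta_1=0$ and $\partial_x\beta_3=0$ on $U$ (so $\beta_1,\partial_y\beta_1,\beta_3$ are functions of $y$ alone). If $v_x\neq0$ on $U$, then $\partial_y\alpha_1=0$ and $\partial_y\alpha_3=0$ on $U$ (so $\alpha_1,\partial_x\alpha_1,\alpha_3$ are functions of $x$ alone).
   Context: System (W): $u_{xy}+\frac{u_xu_y}{2(1+e^{(u+v)/2})}=0$, $v_{xy}+\frac{v_xv_y}{2(1+e^{(u+v)/2})}=0$. Define \[ \beta_1=\frac{u_yv_y}{1+e^{-(u+v)/2}},\quad \beta_3=\frac{2u_{yy}+u_y^2-\beta_1}{u_y},\quad \alpha_1=\frac{u_xv_x}{1+e^{-(u+v)/2}},\quad \alpha_3=\frac{2v_{xx}+v_x^2-\alpha_1}{v_x}. \] *)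

theory Defs
  imports "HOL-Analysis.Analysis"
begin

definition Dx :: "(real \<times> real \<Rightarrow> real) \<Rightarrow> real \<times> real \<Rightarrow> real" where
  "Dx f = (\<lambda>(x, y). deriv (\<lambda>s. f (s, y)) x)"

definition Dy :: "(real \<times> real \<Rightarrow> real) \<Rightarrow> real \<times> real \<Rightarrow> real" where
  "Dy f = (\<lambda>(x, y). deriv (\<lambda>t. f (x, t)) y)"

fun Ck_on :: "nat \<Rightarrow> (real \<times> real \<Rightarrow> real) \<Rightarrow> (real \<times> real) set \<Rightarrow> bool" where
  "Ck_on 0 f U = continuous_on U f"
| "Ck_on (Suc k) f U =
     (continuous_on U f \<and>
      (\<forall>(x, y) \<in> U. (\<lambda>s. f (s, y)) differentiable (at x)) \<and>
      (\<forall>(x, y) \<in> U. (\<lambda>t. f (x, t)) differentiable (at y)) \<and>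
      Ck_on k (Dx f) U \<and> Ck_on k (Dy f) U)"

definition beta1 :: "(real \<times> real \<Rightarrow> real) \<Rightarrow> (real \<times> real \<Rightarrow> real) \<Rightarrow> real \<times> real \<Rightarrow> real" where
  "beta1 u v = (\<lambda>p. Dy u p * Dy v p / (1 + exp (- (u p + v p) / 2)))"

definition beta3 :: "(real \<times> real \<Rightarrow> real) \<Rightarrow> (real \<times> real \<Rightarrow> real) \<Rightarrow> real \<times> real \<Rightarrow> real" where
  "beta3 u v = (\<lambda>p. (2 * Dy (Dy u) p + (Dy u p)^2 - beta1 u v p) / Dy u p)"

definition alpha1 :: "(real \<times> real \<Rightarrow> real) \<Rightarrow> (real \<times> real \<Rightarrow> real) \<Rightarrow> real \<times> real \<Rightarrow> real" where
  "alpha1 u v = (\<lambda>p. Dx u p * Dx v p / (1 + exp (- (u p + v p) / 2)))"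

definition alpha3 :: "(real \<times> real \<Rightarrow> real) \<Rightarrow> (real \<times> real \<Rightarrow> real) \<Rightarrow> real \<times> real \<Rightarrow> real" where
  "alpha3 u v = (\<lambda>p. (2 * Dx (Dx v) p + (Dx v p)^2 - alpha1 u v p) / Dx v p)"

definition solves_W :: "(real \<times> real \<Rightarrow> real) \<Rightarrow> (real \<times> real \<Rightarrow> real) \<Rightarrow> (real \<times> real) set \<Rightarrow> bool" where
  "solves_W u v U =
     (\<forall>p \<in> U.
        Dy (Dx u) p + Dx u p * Dy u p / (2 * (1 + exp ((u p + v p) / 2))) = 0 \<and>
        Dy (Dx v) p + Dx v p * Dy v p / (2 * (1 + exp ((u p + v p) / 2))) = 0)"

end

theory Submission
  imports Defs
begin


lemma Dx_der:
  assumes "(\<lambda>s. f (s, b)) differentiable (at a)"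
  shows "((\<lambda>s. f (s, b)) has_real_derivative Dx f (a, b)) (at a)"
  using assms by (simp add: Dx_def DERIV_deriv_iff_real_differentiable)

lemma Dy_der:
  assumes "(\<lambda>t. f (a, t)) differentiable (at b)"
  shows "((\<lambda>t. f (a, t)) has_real_derivative Dy f (a, b)) (at b)"
  using assms by (simp add: Dy_def DERIV_deriv_iff_real_differentiable)

lemma abs_lem: fixes a a' b c :: real
  assumes "\<bar>a - b\<bar> < \<bar>c - b\<bar> / 2" "\<bar>a' - c\<bar> < \<bar>c - b\<bar> / 2" "a = a'" shows False
proof -
  have "\<bar>c - b\<bar> \<le> \<bar>a - c\<bar> + \<bar>a - b\<bar>" by (simp add: abs_if)
  then show False using assms by simp
qed

lemma clairaut:
  fixes f :: "real \<times> real \<Rightarrow> real"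
  assumes U: "open U" and p: "(x,y) \<in> U"
  and fx': "\<And>a b. (a,b)\<in>U \<Longrightarrow> (\<lambda>s. f(s,b)) differentiable (at a)"
  and fy': "\<And>a b. (a,b)\<in>U \<Longrightarrow> (\<lambda>t. f(a,t)) differentiable (at b)"
  and fxy': "\<And>a b. (a,b)\<in>U \<Longrightarrow> (\<lambda>t. Dx f (a,t)) differentiable (at b)"
  and fyx': "\<And>a b. (a,b)\<in>U \<Longrightarrow> (\<lambda>s. Dy f (s,b)) differentiable (at a)"
  and c1: "continuous_on U (Dy (Dx f))" and c2: "continuous_on U (Dx (Dy f))"
  shows "Dx (Dy f) (x,y) = Dy (Dx f) (x,y)"
proof (rule ccontr)
  assume ne: "Dx (Dy f) (x,y) \<noteq> Dy (Dx f) (x,y)"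
  define e where "e = \<bar>Dx (Dy f) (x,y) - Dy (Dx f) (x,y)\<bar> / 2"
  have e: "e > 0" using ne by (simp add: e_def)
  have "isCont (Dy (Dx f)) (x,y)" using c1 U p continuous_on_eq_continuous_at by blast
  then obtain d1 where d1: "d1>0" "\<forall>q. dist q (x,y) < d1 \<longrightarrow> dist (Dy (Dx f) q) (Dy (Dx f) (x,y)) < e"
    using e unfolding continuous_at_eps_delta by blast
  have "isCont (Dx (Dy f)) (x,y)" using c2 U p continuous_on_eq_continuous_at by blast
  then obtain d2 where d2: "d2>0" "\<forall>q. dist q (x,y) < d2 \<longrightarrow> dist (Dx (Dy f) q) (Dx (Dy f) (x,y)) < e"
    using e unfolding continuous_at_eps_delta by blast
  obtain d0 where d0: "d0 > 0" "ball (x,y) d0 \<subseteq> U" using U p openE by blast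
  define d where "d = min d0 (min d1 d2)"
  define h where "h = d / 3"
  have h: "h > 0" using d0 d1 d2 by (simp add: h_def d_def)
  have sq: "(s,t) \<in> U \<and> dist (s,t) (x,y) < d1 \<and> dist (s,t) (x,y) < d2"
    if "x \<le> s" "s \<le> x + h" "y \<le> t" "t \<le> y + h" for s t
  proof -
    have "dist (s,t) (x,y) \<le> \<bar>s - x\<bar> + \<bar>t - y\<bar>"
      by (simp add: dist_Pair_Pair dist_real_def sqrt_sum_squares_le_sum_abs)
    also have "\<dots> \<le> 2 * h" using that by simp
    also have "\<dots> < d" using h by (simp add: h_def)
    finally have "dist (s,t) (x,y) < d" .
    then show ?thesis using d0 by (auto simp: d_def dist_commute)
  qed
  have inU: "(s,t) \<in> U" if "x \<le> s" "s \<le> x + h" "y \<le> t" "t \<le> y + h" for s t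
    using sq[OF that] by blast
  define \<phi> where "\<phi> = (\<lambda>s. f (s, y+h) - f (s, y))"
  have "\<exists>z. x < z \<and> z < x + h \<and> \<phi> (x+h) - \<phi> x = (x + h - x) * (Dx f (z, y+h) - Dx f (z, y))"
    unfolding \<phi>_def
    apply (rule MVT2)
    using h apply simp
    apply (rule DERIV_diff)
    using h by (auto intro!: Dx_der fx' inU)
  then obtain \<xi> where xi: "x < \<xi>" "\<xi> < x + h" "\<phi> (x+h) - \<phi> x = h * (Dx f (\<xi>, y+h) - Dx f (\<xi>, y))"
    by auto
  have "\<exists>z. y < z \<and> z < y + h \<and> Dx f (\<xi>, y+h) - Dx f (\<xi>, y) = (y + h - y) * Dy (Dx f) (\<xi>, z)"
    apply (rule MVT2)
    using h apply simp
    using xi h by (auto intro!: Dy_der fxy' inU)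
  then obtain \<eta> where eta: "y < \<eta>" "\<eta> < y + h" "Dx f (\<xi>, y+h) - Dx f (\<xi>, y) = h * Dy (Dx f) (\<xi>, \<eta>)"
    by auto
  define \<psi> where "\<psi> = (\<lambda>t. f (x+h, t) - f (x, t))"
  have "\<exists>z. y < z \<and> z < y + h \<and> \<psi> (y+h) - \<psi> y = (y + h - y) * (Dy f (x+h, z) - Dy f (x, z))"
    unfolding \<psi>_def
    apply (rule MVT2)
    using h apply simp
    apply (rule DERIV_diff)
    using h by (auto intro!: Dy_der fy' inU)
  then obtain \<eta>' where eta': "y < \<eta>'" "\<eta>' < y + h" "\<psi> (y+h) - \<psi> y = h * (Dy f (x+h, \<eta>') - Dy f (x, \<eta>'))"
    by auto
  have "\<exists>z. x < z \<and> z < x + h \<and> Dy f (x+h, \<eta>') - Dy f (x, \<eta>') = (x + h - x) * Dx (Dy f) (z, \<eta>')"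
    apply (rule MVT2)
    using h apply simp
    using eta' h by (auto intro!: Dx_der fyx' inU)
  then obtain \<xi>' where xi': "x < \<xi>'" "\<xi>' < x + h" "Dy f (x+h, \<eta>') - Dy f (x, \<eta>') = h * Dx (Dy f) (\<xi>', \<eta>')"
    by auto
  have "\<phi> (x+h) - \<phi> x = \<psi> (y+h) - \<psi> y" by (simp add: \<phi>_def \<psi>_def)
  then have "h * (h * Dy (Dx f) (\<xi>, \<eta>)) = h * (h * Dx (Dy f) (\<xi>', \<eta>'))"
    using xi eta eta' xi' by simp
  then have eq: "Dy (Dx f) (\<xi>, \<eta>) = Dx (Dy f) (\<xi>', \<eta>')" using h by simp
  have a1: "dist (Dy (Dx f) (\<xi>, \<eta>)) (Dy (Dx f) (x,y)) < e"
    using d1 sq[of \<xi> \<eta>] xi eta by auto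
  have a2: "dist (Dx (Dy f) (\<xi>', \<eta>')) (Dx (Dy f) (x,y)) < e"
    using d2 sq[of \<xi>' \<eta>'] xi' eta' by auto
  show False using a1 a2 eq unfolding e_def dist_real_def by (rule abs_lem)
qed


definition sg :: "real \<Rightarrow> real" where "sg z = 1 / (1 + exp (- z))"

lemma one_minus_sg: "1 - sg z = exp (- z) / (1 + exp (- z))"
proof -
  have "1 + exp (- z) \<noteq> 0" by (smt (verit) exp_gt_zero)
  then show ?thesis by (simp add: sg_def field_simps)
qed

lemma sg_inv: "1 / (1 + exp z) = 1 - sg z"
proof -
  have p: "exp z > 0" by simp
  have "1 + exp (- z) \<noteq> 0" "1 + exp z \<noteq> 0" by (smt (verit) exp_gt_zero)+
  then show ?thesis unfolding one_minus_sg exp_minus using p by (simp add: field_simps)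
qed

lemma sg_der: "(sg has_real_derivative sg z * (1 - sg z)) (at z)"
proof -
  have n: "1 + exp (- z) \<noteq> 0" by (smt (verit) exp_gt_zero)
  have "((\<lambda>z. 1 / (1 + exp (- z))) has_real_derivative exp (- z) / (1 + exp (- z))^2) (at z)"
    apply (rule derivative_eq_intros refl | simp add: n)+
    using n by (simp add: field_simps power2_eq_square)
  moreover have "exp (- z) / (1 + exp (- z))^2 = sg z * (1 - sg z)"
    unfolding one_minus_sg using n by (simp add: sg_def power2_eq_square)
  ultimately show ?thesis by (simp add: sg_def[abs_def])
qed

lemma sg_der_eq:
  assumes "(f has_real_derivative f') (at x within S)" "D = sg (f x) * (1 - sg (f x)) * f'"
  shows "((\<lambda>x. sg (f x)) has_real_derivative D) (at x within S)"
  using DERIV_chain2[OF sg_der assms(1)] assms(2) by (simp add: mult.assoc)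

lemma sg_beta: "c / (1 + exp (- a / 2)) = c * sg (a / 2)"
  by (simp add: sg_def)

lemma sg_pde: "c / (2 * (1 + exp z)) = c * (1 - sg z) / 2"
proof -
  have "c / (2 * (1 + exp z)) = c * (1 / (1 + exp z)) / 2" by simp
  then show ?thesis by (simp only: sg_inv)
qed


lemma ck_down: "Ck_on (Suc k) f U \<Longrightarrow> Ck_on k f U"
proof (induction k arbitrary: f)
  case 0
  then show ?case by (simp only: Ck_on.simps)
next
  case (Suc k)
  show ?case
    using Suc.prems Suc.IH[of "Dx f"] Suc.IH[of "Dy f"]
    unfolding Ck_on.simps(2)[of "Suc k" f] Ck_on.simps(2)[of k f] by blast
qed

lemma ck_dx: "Ck_on (Suc k) f U \<Longrightarrow> (a,b) \<in> U \<Longrightarrow> (\<lambda>s. f (s,b)) differentiable (at a)"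
  unfolding Ck_on.simps(2)[of k f] by blast
lemma ck_dy: "Ck_on (Suc k) f U \<Longrightarrow> (a,b) \<in> U \<Longrightarrow> (\<lambda>t. f (a,t)) differentiable (at b)"
  unfolding Ck_on.simps(2)[of k f] by blast
lemma ck_Dx: "Ck_on (Suc k) f U \<Longrightarrow> Ck_on k (Dx f) U"
  unfolding Ck_on.simps(2)[of k f] by blast
lemma ck_Dy: "Ck_on (Suc k) f U \<Longrightarrow> Ck_on k (Dy f) U"
  unfolding Ck_on.simps(2)[of k f] by blast

lemma clairaut2:
  assumes "open U" "(x,y) \<in> U" "Ck_on (Suc (Suc 0)) f U"
  shows "Dx (Dy f) (x,y) = Dy (Dx f) (x,y)"
proof (rule clairaut[OF assms(1,2)])
  note A = assms(3)
  show "\<And>a b. (a,b)\<in>U \<Longrightarrow> (\<lambda>s. f(s,b)) differentiable (at a)" by (rule ck_dx[OF A])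
  show "\<And>a b. (a,b)\<in>U \<Longrightarrow> (\<lambda>t. f(a,t)) differentiable (at b)" by (rule ck_dy[OF A])
  show "\<And>a b. (a,b)\<in>U \<Longrightarrow> (\<lambda>t. Dx f (a,t)) differentiable (at b)" by (rule ck_dy[OF ck_Dx[OF A]])
  show "\<And>a b. (a,b)\<in>U \<Longrightarrow> (\<lambda>s. Dy f (s,b)) differentiable (at a)" by (rule ck_dx[OF ck_Dy[OF A]])
  show "continuous_on U (Dy (Dx f))" using ck_Dy[OF ck_Dx[OF A]] by (simp only: Ck_on.simps(1))
  show "continuous_on U (Dx (Dy f))" using ck_Dx[OF ck_Dy[OF A]] by (simp only: Ck_on.simps(1))
qed


lemma beta_part:
  fixes u v :: "real \<times> real \<Rightarrow> real"
  assumes U: "open U" and u3: "Ck_on (Suc (Suc (Suc 0))) u U" and v3: "Ck_on (Suc (Suc (Suc 0))) v U"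
    and pde: "solves_W u v U" and nz: "\<forall>p\<in>U. Dy u p \<noteq> 0" and p: "(x,y) \<in> U"
  shows "((\<lambda>s. beta1 u v (s,y)) has_real_derivative 0) (at x) \<and> ((\<lambda>s. beta3 u v (s,y)) has_real_derivative 0) (at x)"
proof -
  have pdeu: "Dy (Dx u) q = - (Dx u q * Dy u q * (1 - sg ((u q + v q)/2)) / 2)" if "q \<in> U" for q
    using pde that unfolding solves_W_def sg_pde by (auto simp: algebra_simps)
  have pdev: "Dy (Dx v) q = - (Dx v q * Dy v q * (1 - sg ((u q + v q)/2)) / 2)" if "q \<in> U" for q
    using pde that unfolding solves_W_def sg_pde by (auto simp: algebra_simps)
  have clu: "Dx (Dy u) (a,b) = Dy (Dx u) (a,b)" if "(a,b) \<in> U" for a b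
    using clairaut2[OF U that ck_down[OF u3]] .
  have clv: "Dx (Dy v) (a,b) = Dy (Dx v) (a,b)" if "(a,b) \<in> U" for a b
    using clairaut2[OF U that ck_down[OF v3]] .
  have cluy: "Dx (Dy (Dy u)) (x,y) = Dy (Dx (Dy u)) (x,y)"
    using clairaut2[OF U p ck_Dy[OF u3]] .
  have b1form: "beta1 u v q = Dy u q * Dy v q * sg ((u q + v q)/2)" for q
    unfolding beta1_def sg_beta ..
  have du: "((\<lambda>s. u (s,y)) has_real_derivative Dx u (x,y)) (at x)"
    by (rule Dx_der, rule ck_dx[OF u3 p])
  have dv: "((\<lambda>s. v (s,y)) has_real_derivative Dx v (x,y)) (at x)"
    by (rule Dx_der, rule ck_dx[OF v3 p])
  have duy: "((\<lambda>s. Dy u (s,y)) has_real_derivative Dx (Dy u) (x,y)) (at x)"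
    by (rule Dx_der, rule ck_dx[OF ck_Dy[OF u3] p])
  have dvy: "((\<lambda>s. Dy v (s,y)) has_real_derivative Dx (Dy v) (x,y)) (at x)"
    by (rule Dx_der, rule ck_dx[OF ck_Dy[OF v3] p])
  have duyy: "((\<lambda>s. Dy (Dy u) (s,y)) has_real_derivative Dx (Dy (Dy u)) (x,y)) (at x)"
    by (rule Dx_der, rule ck_dx[OF ck_Dy[OF ck_Dy[OF u3]] p])
  have Mu: "Dx (Dy u) (x,y) = - (Dx u (x,y) * Dy u (x,y) * (1 - sg ((u (x,y) + v (x,y))/2)) / 2)"
    using clu[OF p] pdeu[OF p] by simp
  have Mv: "Dx (Dy v) (x,y) = - (Dx v (x,y) * Dy v (x,y) * (1 - sg ((u (x,y) + v (x,y))/2)) / 2)"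
    using clv[OF p] pdev[OF p] by simp
  have B1: "((\<lambda>s. beta1 u v (s,y)) has_real_derivative 0) (at x)"
    unfolding b1form
    apply (rule derivative_eq_intros sg_der_eq du dv duy dvy refl)+
    apply simp
    apply (rule refl)
    apply (rule refl)
    unfolding Mu Mv by (simp add: field_simps)
  define S where "S = sg ((u (x,y) + v (x,y))/2)"
  have dtu: "((\<lambda>t. u (x,t)) has_real_derivative Dy u (x,y)) (at y)"
    by (rule Dy_der, rule ck_dy[OF u3 p])
  have dtv: "((\<lambda>t. v (x,t)) has_real_derivative Dy v (x,y)) (at y)"
    by (rule Dy_der, rule ck_dy[OF v3 p])
  have dtux: "((\<lambda>t. Dx u (x,t)) has_real_derivative Dy (Dx u) (x,y)) (at y)"
    by (rule Dy_der, rule ck_dy[OF ck_Dx[OF u3] p])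
  have dtuy: "((\<lambda>t. Dy u (x,t)) has_real_derivative Dy (Dy u) (x,y)) (at y)"
    by (rule Dy_der, rule ck_dy[OF ck_Dy[OF u3] p])
  have dtuxy: "((\<lambda>t. Dx (Dy u) (x,t)) has_real_derivative Dy (Dx (Dy u)) (x,y)) (at y)"
    by (rule Dy_der, rule ck_dy[OF ck_Dx[OF ck_Dy[OF u3]] p])
  define G' where "G' = - ((Dy (Dx u) (x,y) * Dy u (x,y) + Dx u (x,y) * Dy (Dy u) (x,y)) * (1 - S)
      - Dx u (x,y) * Dy u (x,y) * (S * (1 - S) * ((Dy u (x,y) + Dy v (x,y)) / 2))) / 2"
  have dG: "((\<lambda>t. - (Dx u (x,t) * Dy u (x,t) * (1 - sg ((u (x,t) + v (x,t))/2)) / 2)) has_real_derivative G') (at y)"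
    apply (rule derivative_eq_intros sg_der_eq dtu dtv dtux dtuy refl | (simp; fail))+
    unfolding G'_def S_def by (simp add: field_simps)
  have opn: "open (Pair x -` U)"
    by (rule continuous_open_vimage[OF U]) (intro continuous_intros)
  have dG2: "((\<lambda>t. Dx (Dy u) (x,t)) has_real_derivative G') (at y)"
  proof (rule has_field_derivative_transform_within_open[OF dG opn])
    show "y \<in> Pair x -` U" using p by simp
    fix t assume "t \<in> Pair x -` U"
    then have "(x,t) \<in> U" by simp
    then show "- (Dx u (x,t) * Dy u (x,t) * (1 - sg ((u (x,t) + v (x,t))/2)) / 2) = Dx (Dy u) (x,t)"
      using clu pdeu by simp
  qed
  have Tv: "Dx (Dy (Dy u)) (x,y) = G'"
    using cluy DERIV_unique[OF dtuxy dG2] by simp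
  have uy0: "Dy u (x,y) \<noteq> 0" using nz p by blast
  have B3: "((\<lambda>s. beta3 u v (s,y)) has_real_derivative 0) (at x)"
    unfolding beta3_def
    apply (rule derivative_eq_intros B1 duyy duy refl | (simp; fail))+
    apply (rule uy0)
    using uy0 unfolding Tv G'_def Mu pdeu[OF p] b1form S_def[symmetric]
    by (simp add: field_simps power2_eq_square)
  show ?thesis using B1 B3 by blast
qed



lemma alpha_part:
  fixes u v :: "real \<times> real \<Rightarrow> real"
  assumes U: "open U" and u3: "Ck_on (Suc (Suc (Suc 0))) u U" and v3: "Ck_on (Suc (Suc (Suc 0))) v U"
    and pde: "solves_W u v U" and nz: "\<forall>p\<in>U. Dx v p \<noteq> 0" and p: "(x,y) \<in> U"
  shows "((\<lambda>t. alpha1 u v (x,t)) has_real_derivative 0) (at y) \<and> ((\<lambda>t. alpha3 u v (x,t)) has_real_derivative 0) (at y)"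
proof -
  have pdeu: "Dy (Dx u) q = - (Dx u q * Dy u q * (1 - sg ((u q + v q)/2)) / 2)" if "q \<in> U" for q
    using pde that unfolding solves_W_def sg_pde by (auto simp: algebra_simps)
  have pdev: "Dy (Dx v) q = - (Dx v q * Dy v q * (1 - sg ((u q + v q)/2)) / 2)" if "q \<in> U" for q
    using pde that unfolding solves_W_def sg_pde by (auto simp: algebra_simps)
  have clv: "Dx (Dy v) (a,b) = Dy (Dx v) (a,b)" if "(a,b) \<in> U" for a b
    using clairaut2[OF U that ck_down[OF v3]] .
  have clvx: "Dx (Dy (Dx v)) (x,y) = Dy (Dx (Dx v)) (x,y)"
    using clairaut2[OF U p ck_Dx[OF v3]] .
  have a1form: "alpha1 u v q = Dx u q * Dx v q * sg ((u q + v q)/2)" for q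
    unfolding alpha1_def sg_beta ..
  have du: "((\<lambda>t. u (x,t)) has_real_derivative Dy u (x,y)) (at y)"
    by (rule Dy_der, rule ck_dy[OF u3 p])
  have dv: "((\<lambda>t. v (x,t)) has_real_derivative Dy v (x,y)) (at y)"
    by (rule Dy_der, rule ck_dy[OF v3 p])
  have dux: "((\<lambda>t. Dx u (x,t)) has_real_derivative Dy (Dx u) (x,y)) (at y)"
    by (rule Dy_der, rule ck_dy[OF ck_Dx[OF u3] p])
  have dvx: "((\<lambda>t. Dx v (x,t)) has_real_derivative Dy (Dx v) (x,y)) (at y)"
    by (rule Dy_der, rule ck_dy[OF ck_Dx[OF v3] p])
  have dvxx: "((\<lambda>t. Dx (Dx v) (x,t)) has_real_derivative Dy (Dx (Dx v)) (x,y)) (at y)"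
    by (rule Dy_der, rule ck_dy[OF ck_Dx[OF ck_Dx[OF v3]] p])
  have Mu: "Dy (Dx u) (x,y) = - (Dx u (x,y) * Dy u (x,y) * (1 - sg ((u (x,y) + v (x,y))/2)) / 2)"
    using pdeu[OF p] by simp
  have Mv: "Dy (Dx v) (x,y) = - (Dx v (x,y) * Dy v (x,y) * (1 - sg ((u (x,y) + v (x,y))/2)) / 2)"
    using pdev[OF p] by simp
  have A1: "((\<lambda>t. alpha1 u v (x,t)) has_real_derivative 0) (at y)"
    unfolding a1form
    apply (rule derivative_eq_intros sg_der_eq du dv dux dvx refl)+
    apply simp
    apply (rule refl)
    apply (rule refl)
    unfolding Mu Mv by (simp add: field_simps)
  define S where "S = sg ((u (x,y) + v (x,y))/2)"
  have dsu: "((\<lambda>s. u (s,y)) has_real_derivative Dx u (x,y)) (at x)"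
    by (rule Dx_der, rule ck_dx[OF u3 p])
  have dsv: "((\<lambda>s. v (s,y)) has_real_derivative Dx v (x,y)) (at x)"
    by (rule Dx_der, rule ck_dx[OF v3 p])
  have dsvx: "((\<lambda>s. Dx v (s,y)) has_real_derivative Dx (Dx v) (x,y)) (at x)"
    by (rule Dx_der, rule ck_dx[OF ck_Dx[OF v3] p])
  have dsvy: "((\<lambda>s. Dy v (s,y)) has_real_derivative Dx (Dy v) (x,y)) (at x)"
    by (rule Dx_der, rule ck_dx[OF ck_Dy[OF v3] p])
  have dsvxy: "((\<lambda>s. Dy (Dx v) (s,y)) has_real_derivative Dx (Dy (Dx v)) (x,y)) (at x)"
    by (rule Dx_der, rule ck_dx[OF ck_Dy[OF ck_Dx[OF v3]] p])
  define G' where "G' = - ((Dx (Dx v) (x,y) * Dy v (x,y) + Dx v (x,y) * Dx (Dy v) (x,y)) * (1 - S)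
      - Dx v (x,y) * Dy v (x,y) * (S * (1 - S) * ((Dx u (x,y) + Dx v (x,y)) / 2))) / 2"
  have dG: "((\<lambda>s. - (Dx v (s,y) * Dy v (s,y) * (1 - sg ((u (s,y) + v (s,y))/2)) / 2)) has_real_derivative G') (at x)"
    apply (rule derivative_eq_intros sg_der_eq dsu dsv dsvx dsvy refl | (simp; fail))+
    unfolding G'_def S_def by (simp add: field_simps)
  have opn: "open ((\<lambda>s. (s,y)) -` U)"
    by (rule continuous_open_vimage[OF U]) (intro continuous_intros)
  have dG2: "((\<lambda>s. Dy (Dx v) (s,y)) has_real_derivative G') (at x)"
  proof (rule has_field_derivative_transform_within_open[OF dG opn])
    show "x \<in> (\<lambda>s. (s,y)) -` U" using p by simp
    fix s assume "s \<in> (\<lambda>s. (s,y)) -` U"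
    then have "(s,y) \<in> U" by simp
    then show "- (Dx v (s,y) * Dy v (s,y) * (1 - sg ((u (s,y) + v (s,y))/2)) / 2) = Dy (Dx v) (s,y)"
      using pdev by simp
  qed
  have Tv: "Dy (Dx (Dx v)) (x,y) = G'"
    using clvx DERIV_unique[OF dsvxy dG2] by simp
  have vx0: "Dx v (x,y) \<noteq> 0" using nz p by blast
  have A3: "((\<lambda>t. alpha3 u v (x,t)) has_real_derivative 0) (at y)"
    unfolding alpha3_def
    apply (rule derivative_eq_intros A1 dvxx dvx refl | (simp; fail))+
    apply (rule vx0)
    using vx0 unfolding Tv G'_def Mv clv[OF p] pdev[OF p] a1form S_def[symmetric]
    by (simp add: field_simps power2_eq_square)
  show ?thesis using A1 A3 by blast
qed

theorem mainTheorem3: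
  fixes u v :: "real \<times> real \<Rightarrow> real" and U :: "(real \<times> real) set"
  assumes "open U"
    and "Ck_on 3 u U" and "Ck_on 3 v U"
    and "solves_W u v U"
  shows "((\<forall>p \<in> U. Dy u p \<noteq> 0) \<longrightarrow>
           (\<forall>(x, y) \<in> U. ((\<lambda>s. beta1 u v (s, y)) has_real_derivative 0) (at x) \<and>
                         ((\<lambda>s. beta3 u v (s, y)) has_real_derivative 0) (at x)))
       \<and> ((\<forall>p \<in> U. Dx v p \<noteq> 0) \<longrightarrow>
           (\<forall>(x, y) \<in> U. ((\<lambda>t. alpha1 u v (x, t)) has_real_derivative 0) (at y) \<and>
                         ((\<lambda>t. alpha3 u v (x, t)) has_real_derivative 0) (at y)))"
proof -
  have u3: "Ck_on (Suc (Suc (Suc 0))) u U" using assms(2) by (simp only: numeral_3_eq_3)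
  have v3: "Ck_on (Suc (Suc (Suc 0))) v U" using assms(3) by (simp only: numeral_3_eq_3)
  show ?thesis
    using beta_part[OF assms(1) u3 v3 assms(4)] alpha_part[OF assms(1) u3 v3 assms(4)]
    by blast
qed

end
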